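(* Let $\mathcal A_{0-2}$ be the finite automaton with final state output having states $a_0,a_1,a_2$, input alphabet $X_3=\{0,1,2\}$, initial state $a_1$, transitions $a_1\xrightarrow{0}a_0$, $a_1\xrightarrow{1}a_1$, $a_1\xrightarrow{2}a_2$, and $a_0\xrightarrow{x}a_0$, $a_2\xrightarrow{x}a_2$ for all $x\in X_3$, and output $1$ at $a_0$, $1$ at $a_1$, $-1$ at $a_2$. Then $w_\alpha$ is a ternary automatic sequence produced by $\mathcal A_{0-2}$: for every integer $i\ge0$ and every word $u_0u_1\dots u_m$ over $X_3$ with $i=\sum_{j=0}^m u_j3^j$, the output of the state reached from $a_1$ after reading $u_0,u_1,\dots,u_m$ in this order is the $i$-th term (indexing from $0$) of $w_\alpha$.
   Context: $w_\alpha=\lim_{n\to\infty}\phi^n(1)$, where $\phi$ is the monoid endomorphism of $\{1,-1\}^*$ determined by $\phi(1)=1\,1\,(-1)$ and $\phi(-1)=1\,(-1)\,(-1)$. Input digits are read least significant first. *)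

theory Defs
  imports Main
begin

text \<open>The substitution phi on words over {1,-1}: phi(1) = 1 1 (-1), phi(-1) = 1 (-1) (-1).
  Letters other than 1,-1 never occur; we map them to the empty word.\<close>
fun phi_letter :: "int \<Rightarrow> int list" where
  "phi_letter x = (if x = 1 then [1, 1, -1] else if x = -1 then [1, -1, -1] else [])"

definition phi :: "int list \<Rightarrow> int list" where
  "phi w = concat (map phi_letter w)"

text \<open>w_alpha = lim phi^n(1): its i-th term (0-indexed) is the eventual value of the
  i-th letter of phi^n(1).\<close>
definition w_alpha :: "nat \<Rightarrow> int" where
  "w_alpha i = (THE c. \<forall>\<^sub>F n in sequentially.
       i < length ((phi ^^ n) [1]) \<and> (phi ^^ n) [1] ! i = c)"

datatype state = a0 | a1 | a2

fun delta :: "state \<Rightarrow> nat \<Rightarrow> state" where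
  "delta a1 x = (if x = 0 then a0 else if x = 1 then a1 else a2)"
| "delta a0 x = a0"
| "delta a2 x = a2"

fun out :: "state \<Rightarrow> int" where
  "out a0 = 1"
| "out a1 = 1"
| "out a2 = -1"

text \<open>State reached from q after reading the word, first letter first.\<close>
definition run :: "state \<Rightarrow> nat list \<Rightarrow> state" where
  "run q u = fold (\<lambda>x s. delta s x) u q"

end

theory Submission
  imports Defs
begin

fun ff :: "nat \<Rightarrow> int" where
  "ff i = (if i mod 3 = 0 then 1 else if i mod 3 = 2 then -1 else ff (i div 3))"

declare ff.simps[simp del]

lemma ff_pm: "ff i \<in> {1, -1}"
  by (induction i rule: ff.induct) (subst ff.simps, auto)

lemma set_phi: "set (phi w) \<subseteq> {1, -1}"
  unfolding phi_def by auto

lemma len_phi: "set w \<subseteq> {1, -1} \<Longrightarrow> length (phi w) = 3 * length w"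
  by (induction w) (auto simp: phi_def)

lemma phi_cons: "phi (x # w) = phi_letter x @ phi w"
  by (simp add: phi_def)

lemma phi_nth: "set w \<subseteq> {1, -1} \<Longrightarrow> i < 3 * length w \<Longrightarrow>
   phi w ! i = phi_letter (w ! (i div 3)) ! (i mod 3)"
proof (induction w arbitrary: i)
  case Nil then show ?case by simp
next
  case (Cons x w)
  have lx: "length (phi_letter x) = 3" using Cons.prems by auto
  show ?case
  proof (cases "i < 3")
    case True
    then show ?thesis using lx by (simp add: phi_cons nth_append)
  next
    case False
    then obtain j where j: "i = j + 3" by (metis add.commute le_Suc_ex not_less)
    have "phi (x # w) ! i = phi w ! j" using lx j by (simp add: phi_cons nth_append)
    also have "\<dots> = phi_letter (w ! (j div 3)) ! (j mod 3)"
      using Cons j by auto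
    also have "\<dots> = phi_letter ((x#w) ! (i div 3)) ! (i mod 3)"
    proof -
      have "i div 3 = Suc (j div 3)" "i mod 3 = j mod 3" using j by auto
      then show ?thesis by (simp del: phi_letter.simps)
    qed
    finally show ?thesis .
  qed
qed

lemma W_set: "set ((phi ^^ n) [1]) \<subseteq> {1, -1}"
  by (cases n) (auto simp: set_phi)

lemma W_len: "length ((phi ^^ n) [1]) = 3 ^ n"
  by (induction n) (auto simp: len_phi W_set)

lemma W_nth: "i < 3 ^ n \<Longrightarrow> (phi ^^ n) [1] ! i = ff i"
proof (induction n arbitrary: i)
  case 0 then show ?case by (simp add: ff.simps)
next
  case (Suc n)
  have d: "i div 3 < 3 ^ n" using Suc.prems by auto
  have "(phi ^^ Suc n) [1] ! i = phi_letter (ff (i div 3)) ! (i mod 3)"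
    using phi_nth[OF W_set, of i n] Suc W_len d by auto
  also have "\<dots> = ff i"
  proof -
    have "i mod 3 = 0 \<or> i mod 3 = 1 \<or> i mod 3 = 2" by auto
    then show ?thesis using ff_pm[of "i div 3"]
      by (subst (2) ff.simps) auto
  qed
  finally show ?case .
qed

lemma w_alpha_ff: "w_alpha i = ff i"
proof -
  have ev: "\<forall>\<^sub>F n in sequentially. i < length ((phi ^^ n) [1]) \<and> (phi ^^ n) [1] ! i = ff i"
  proof (rule eventually_sequentiallyI[of i])
    fix n assume "i \<le> n"
    have "i < 3 ^ i" by (induction i) auto
    also have "\<dots> \<le> 3 ^ n" using \<open>i \<le> n\<close> by (simp add: power_increasing)
    finally show "i < length ((phi ^^ n) [1]) \<and> (phi ^^ n) [1] ! i = ff i"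
      by (simp add: W_len W_nth)
  qed
  show ?thesis unfolding w_alpha_def
  proof (rule the_equality)
    fix c assume "\<forall>\<^sub>F n in sequentially. i < length ((phi ^^ n) [1]) \<and> (phi ^^ n) [1] ! i = c"
    from eventually_conj[OF this ev] have "\<forall>\<^sub>F n in sequentially. c = ff i"
      by (rule eventually_mono) auto
    then show "c = ff i" by simp
  qed (rule ev)
qed

lemma ff_step: "ff (1 + 3 * v) = ff v"
proof -
  have d: "(1 + 3 * v) div 3 = v" by simp
  have m: "(1 + 3 * v) mod 3 = 1" by simp
  have "ff (1 + 3 * v) = (if (1 + 3 * v) mod 3 = 0 then 1 else if (1 + 3 * v) mod 3 = 2 then -1 else ff ((1 + 3 * v) div 3))"
    by (rule ff.simps)
  also have "\<dots> = ff v" unfolding m d by simp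
  finally show ?thesis .
qed

lemma ff_0: "ff (3 * v) = 1"
proof -
  have m: "(3 * v) mod 3 = 0" by simp
  have "ff (3 * v) = (if (3 * v) mod 3 = 0 then 1 else if (3 * v) mod 3 = 2 then -1 else ff ((3 * v) div 3))"
    by (rule ff.simps)
  also have "\<dots> = 1" unfolding m by simp
  finally show ?thesis .
qed

lemma ff_2: "ff (2 + 3 * v) = -1"
proof -
  have m: "(2 + 3 * v) mod 3 = 2" by presburger
  have "ff (2 + 3 * v) = (if (2 + 3 * v) mod 3 = 0 then 1 else if (2 + 3 * v) mod 3 = 2 then -1 else ff ((2 + 3 * v) div 3))"
    by (rule ff.simps)
  also have "\<dots> = -1" unfolding m by simp
  finally show ?thesis .
qed

fun val :: "nat list \<Rightarrow> nat" where
  "val [] = 0"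
| "val (x # xs) = x + 3 * val xs"

lemma val_sum: "(\<Sum>j<length u. u ! j * 3 ^ j) = val u"
proof (induction u)
  case Nil then show ?case by simp
next
  case (Cons x xs)
  have "(\<Sum>j<length (x#xs). (x#xs) ! j * 3 ^ j) = x + (\<Sum>j<length xs. xs ! j * 3 ^ (Suc j))"
    by (simp add: sum.lessThan_Suc_shift del: sum.lessThan_Suc)
  also have "\<dots> = x + 3 * (\<Sum>j<length xs. xs ! j * 3 ^ j)"
    by (simp add: sum_distrib_left mult.assoc mult.left_commute)
  finally show ?case using Cons by simp
qed

lemma run_cons: "run q (x # xs) = run (delta q x) xs"
  by (simp add: run_def)

lemma run_a0: "run a0 xs = a0"
  by (induction xs) (auto simp: run_def)

lemma run_a2: "run a2 xs = a2"
  by (induction xs) (auto simp: run_def)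

lemma main: "set u \<subseteq> {0, 1, 2} \<Longrightarrow> out (run a1 u) = ff (val u)"
proof (induction u)
  case Nil then show ?case using ff_0[of 0] by (simp add: run_def)
next
  case (Cons x xs)
  then have x: "x = 0 \<or> x = 1 \<or> x = 2" and ih: "out (run a1 xs) = ff (val xs)" by auto
  show ?case using x
  proof (elim disjE)
    assume "x = 0" then show ?thesis by (simp add: run_cons run_a0 ff_0)
  next
    assume "x = 1"
    have "ff (1 + 3 * val xs) = ff (val xs)" by (rule ff_step)
    then show ?thesis using ih \<open>x = 1\<close> by (simp add: run_cons)
  next
    assume "x = 2" then show ?thesis using ff_2[of "val xs"] by (simp add: run_cons run_a2 del: ff_2)
  qed
qed

theorem mainTheorem5:
  fixes u :: "nat list"
  assumes "u \<noteq> []" and "set u \<subseteq> {0, 1, 2}"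
  shows "out (run a1 u) = w_alpha (\<Sum>j<length u. u ! j * 3 ^ j)"
  using main[OF assms(2)] by (simp add: val_sum w_alpha_ff)

end
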